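(* A binary relation $\succsim$ on $l_\infty$ satisfies Weak order, Continuity, ICRP, Convexity, Monotone continuity, ISU, IOU, Strong monotonicity and IDIS if and only if there exists a unique $\delta\in(0,1)$ such that $$I(x)=(1-\delta)\sum_{t=0}^{\infty}\delta^t x_t$$ is a constant equivalent representing $\succsim$.
   Context: $l_\infty$: real bounded sequences $x=(x_0,x_1,\dots)$ with sup norm; $\theta\in\mathbb R$ also denotes a constant sequence; $x\ge y$ coordinatewise, $x>y$ means $x\ge y$ and $x\ne y$. A constant equivalent representing $\succsim$ is $I:l_\infty\to\mathbb R$ with $x\sim I(x)$ and $x\succsim y\iff I(x)\ge I(y)$. $xAy$ equals $x$ on $A$ and $y$ off $A$; $(E_n)\downarrow\emptyset$ means decreasing with empty intersection. Weak order: complete, transitive. Strong monotonicity: $x\ge y\Rightarrow x\succsim y$ and $x>y\Rightarrow x\succ y$. Continuity: for $x\succsim y\succsim z$ the sets $\{\alpha\in[0,1]:\alpha x+(1-\alpha)z\succsim y\}$, $\{\alpha\in[0,1]:y\succsim\alpha x+(1-\alpha)z\}$ are closed. ICRP: $x\succsim y\Rightarrow x+\theta\succsim y+\theta$. Convexity: $x\succsim\theta,y\succsim\theta\Rightarrow\lambda x+(1-\lambda)y\succsim\theta$ for $\lambda\in[0,1]$. Monotone continuity: if $x\succ\theta$ and $(E_n)\downarrow\emptyset$, then for every $k\in\mathbb R$ there is $n_0$ with $kE_{n_0}x\succ\theta$. ISU: $x\succsim y$, $\alpha\ge 0\Rightarrow\alpha x\succsim\alpha y$. IOU: $x\sim y\Rightarrow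 x+z\sim y+z$ for all $z\in l_\infty$. IDIS: $x+d\succsim x\Rightarrow x+(0,d)\succsim x$, where $(0,d)=(0,d_0,d_1,\dots)$. *)

theory Defs
  imports "HOL-Analysis.Analysis"
begin

type_synonym seq = "nat \<Rightarrow> real"
type_synonym prefrel = "seq \<Rightarrow> seq \<Rightarrow> bool"

definition linf :: "seq set" where
  "linf = {x. bounded (range x)}"

definition cst :: "real \<Rightarrow> seq" where
  "cst \<theta> = (\<lambda>_. \<theta>)"

definition strict :: "prefrel \<Rightarrow> seq \<Rightarrow> seq \<Rightarrow> bool" where
  "strict R x y \<longleftrightarrow> R x y \<and> \<not> R y x"

definition indiff :: "prefrel \<Rightarrow> seq \<Rightarrow> seq \<Rightarrow> bool" where
  "indiff R x y \<longleftrightarrow> R x y \<and> R y x"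

definition glue :: "seq \<Rightarrow> nat set \<Rightarrow> seq \<Rightarrow> seq" where
  "glue x A y = (\<lambda>t. if t \<in> A then x t else y t)"

definition shift0 :: "seq \<Rightarrow> seq" where
  "shift0 d = (\<lambda>t. case t of 0 \<Rightarrow> 0 | Suc s \<Rightarrow> d s)"

definition weak_order :: "prefrel \<Rightarrow> bool" where
  "weak_order R \<longleftrightarrow>
     (\<forall>x\<in>linf. \<forall>y\<in>linf. R x y \<or> R y x) \<and>
     (\<forall>x\<in>linf. \<forall>y\<in>linf. \<forall>z\<in>linf. R x y \<and> R y z \<longrightarrow> R x z)"

definition continuity :: "prefrel \<Rightarrow> bool" where
  "continuity R \<longleftrightarrow>
     (\<forall>x\<in>linf. \<forall>y\<in>linf. \<forall>z\<in>linf. R x y \<and> R y z \<longrightarrow>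
        closed {\<alpha>\<in>{0..1}. R (\<lambda>t. \<alpha> * x t + (1 - \<alpha>) * z t) y} \<and>
        closed {\<alpha>\<in>{0..1}. R y (\<lambda>t. \<alpha> * x t + (1 - \<alpha>) * z t)})"

definition ICRP :: "prefrel \<Rightarrow> bool" where
  "ICRP R \<longleftrightarrow> (\<forall>x\<in>linf. \<forall>y\<in>linf. \<forall>\<theta>::real.
     R x y \<longrightarrow> R (\<lambda>t. x t + \<theta>) (\<lambda>t. y t + \<theta>))"

definition convexity :: "prefrel \<Rightarrow> bool" where
  "convexity R \<longleftrightarrow> (\<forall>x\<in>linf. \<forall>y\<in>linf. \<forall>\<theta>::real. \<forall>lam\<in>{0..1::real}.
     R x (cst \<theta>) \<and> R y (cst \<theta>) \<longrightarrow> R (\<lambda>t. lam * x t + (1 - lam) * y t) (cst \<theta>))"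

definition monotone_continuity :: "prefrel \<Rightarrow> bool" where
  "monotone_continuity R \<longleftrightarrow> (\<forall>x\<in>linf. \<forall>\<theta>::real. \<forall>E :: nat \<Rightarrow> nat set.
     strict R x (cst \<theta>) \<and> (\<forall>n. E (Suc n) \<subseteq> E n) \<and> (\<Inter>n. E n) = {} \<longrightarrow>
     (\<forall>k::real. \<exists>n0. strict R (glue (cst k) (E n0) x) (cst \<theta>)))"

definition ISU :: "prefrel \<Rightarrow> bool" where
  "ISU R \<longleftrightarrow> (\<forall>x\<in>linf. \<forall>y\<in>linf. \<forall>\<alpha>::real.
     R x y \<and> \<alpha> \<ge> 0 \<longrightarrow> R (\<lambda>t. \<alpha> * x t) (\<lambda>t. \<alpha> * y t))"

definition IOU :: "prefrel \<Rightarrow> bool" where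
  "IOU R \<longleftrightarrow> (\<forall>x\<in>linf. \<forall>y\<in>linf. \<forall>z\<in>linf.
     indiff R x y \<longrightarrow> indiff R (\<lambda>t. x t + z t) (\<lambda>t. y t + z t))"

definition strong_monotonicity :: "prefrel \<Rightarrow> bool" where
  "strong_monotonicity R \<longleftrightarrow> (\<forall>x\<in>linf. \<forall>y\<in>linf.
     ((\<forall>t. x t \<ge> y t) \<longrightarrow> R x y) \<and>
     ((\<forall>t. x t \<ge> y t) \<and> x \<noteq> y \<longrightarrow> strict R x y))"

definition IDIS :: "prefrel \<Rightarrow> bool" where
  "IDIS R \<longleftrightarrow> (\<forall>x\<in>linf. \<forall>d\<in>linf.
     R (\<lambda>t. x t + d t) x \<longrightarrow> R (\<lambda>t. x t + shift0 d t) x)"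

definition constant_equivalent :: "prefrel \<Rightarrow> (seq \<Rightarrow> real) \<Rightarrow> bool" where
  "constant_equivalent R I \<longleftrightarrow>
     (\<forall>x\<in>linf. indiff R x (cst (I x))) \<and>
     (\<forall>x\<in>linf. \<forall>y\<in>linf. R x y \<longleftrightarrow> I x \<ge> I y)"

end

theory Submission
  imports Defs
begin

lemma linf_iff: "x \<in> linf \<longleftrightarrow> (\<exists>B. \<forall>t. \<bar>x t\<bar> \<le> B)"
  unfolding linf_def bounded_iff by auto

lemma linfI: "(\<And>t. \<bar>x t\<bar> \<le> B) \<Longrightarrow> x \<in> linf"
  using linf_iff by blast

lemma linfE: assumes "x \<in> linf" obtains B where "B \<ge> 0" "\<And>t. \<bar>x t\<bar> \<le> B"
proof -
  obtain B where "\<forall>t. \<bar>x t\<bar> \<le> B" using assms linf_iff by blast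
  then show ?thesis using that[of B] by (meson abs_ge_zero order_trans)
qed

lemma linf_dom: "y \<in> linf \<Longrightarrow> (\<And>t. \<bar>x t\<bar> \<le> \<bar>y t\<bar>) \<Longrightarrow> x \<in> linf"
  by (metis linfE linfI order_trans)

lemma linf_add[simp]: "x \<in> linf \<Longrightarrow> y \<in> linf \<Longrightarrow> (\<lambda>t. x t + y t) \<in> linf"
proof -
  assume "x \<in> linf" "y \<in> linf"
  then obtain A B where "\<And>t. \<bar>x t\<bar> \<le> A" "\<And>t. \<bar>y t\<bar> \<le> B" by (metis linfE)
  note ab = this
  have "\<bar>x t + y t\<bar> \<le> A + B" for t using ab(1)[of t] ab(2)[of t] by arith
  then show ?thesis by (intro linfI[of _ "A+B"])
qed

lemma linf_diff[simp]: "x \<in> linf \<Longrightarrow> y \<in> linf \<Longrightarrow> (\<lambda>t. x t - y t) \<in> linf"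
proof -
  assume "x \<in> linf" "y \<in> linf"
  then obtain A B where "\<And>t. \<bar>x t\<bar> \<le> A" "\<And>t. \<bar>y t\<bar> \<le> B" by (metis linfE)
  note ab = this
  have "\<bar>x t - y t\<bar> \<le> A + B" for t using ab(1)[of t] ab(2)[of t] by arith
  then show ?thesis by (intro linfI[of _ "A+B"])
qed

lemma linf_scale[simp]: "x \<in> linf \<Longrightarrow> (\<lambda>t. c * x t) \<in> linf"
proof -
  assume "x \<in> linf"
  then obtain B where "\<And>t. \<bar>x t\<bar> \<le> B" by (metis linfE)
  then show ?thesis by (intro linfI[of _ "\<bar>c\<bar>*B"]) (simp add: abs_mult mult_left_mono)
qed

lemma linf_uminus[simp]: "x \<in> linf \<Longrightarrow> (\<lambda>t. - x t) \<in> linf"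
  using linf_scale[of x "-1"] by simp

lemma linf_cst[simp]: "cst a \<in> linf"
  by (rule linfI[of _ "\<bar>a\<bar>"]) (simp add: cst_def)

lemma linf_const[simp]: "(\<lambda>t. a) \<in> linf"
  by (rule linfI[of _ "\<bar>a\<bar>"]) simp

lemma linf_if[simp]: "x \<in> linf \<Longrightarrow> y \<in> linf \<Longrightarrow> (\<lambda>t. if P t then x t else y t) \<in> linf"
proof -
  assume "x \<in> linf" "y \<in> linf"
  then obtain A B where "\<And>t. \<bar>x t\<bar> \<le> A" "\<And>t. \<bar>y t\<bar> \<le> B" by (metis linfE)
  note ab = this
  have "\<bar>if P t then x t else y t\<bar> \<le> A + B" for t using ab(1)[of t] ab(2)[of t] abs_ge_zero[of "x t"] abs_ge_zero[of "y t"] by (cases "P t"; simp; linarith)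
  then show ?thesis by (intro linfI[of _ "A+B"])
qed

lemma linf_sum[simp]: "finite S \<Longrightarrow> (\<And>i. i \<in> S \<Longrightarrow> f i \<in> linf) \<Longrightarrow> (\<lambda>t. \<Sum>i\<in>S. f i t) \<in> linf"
  by (induction S rule: finite_induct) auto

definition ev :: "nat \<Rightarrow> seq" where "ev i = (\<lambda>t. if t = i then 1 else 0)"
definition TT :: "nat \<Rightarrow> seq" where "TT N = (\<lambda>t. if N \<le> t then 1 else 0)"

lemma linf_ev[simp]: "ev i \<in> linf" unfolding ev_def by (rule linfI[of _ 1]) simp
lemma linf_TT[simp]: "TT N \<in> linf" unfolding TT_def by (rule linfI[of _ 1]) simp

lemma fin_repr: assumes "\<And>t. N \<le> t \<Longrightarrow> x t = 0"
  shows "x = (\<lambda>t. \<Sum>i<N. x i * ev i t)"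
proof
  fix t
  show "x t = (\<Sum>i<N. x i * ev i t)"
  proof (cases "t < N")
    case True
    then have "(\<Sum>i<N. x i * ev i t) = (\<Sum>i\<in>{t}. x i * ev i t)"
      by (intro sum.mono_neutral_right) (auto simp: ev_def)
    then show ?thesis by (simp add: ev_def)
  next
    case False
    then have "(\<Sum>i<N. x i * ev i t) = 0" by (intro sum.neutral) (auto simp: ev_def)
    then show ?thesis using assms False by simp
  qed
qed

locale posfun =
  fixes F :: "seq \<Rightarrow> real"
  assumes add: "x \<in> linf \<Longrightarrow> y \<in> linf \<Longrightarrow> F (\<lambda>t. x t + y t) = F x + F y"
    and scale: "x \<in> linf \<Longrightarrow> F (\<lambda>t. c * x t) = c * F x"
    and mono: "x \<in> linf \<Longrightarrow> y \<in> linf \<Longrightarrow> (\<And>t. x t \<le> y t) \<Longrightarrow> F x \<le> F y"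
begin

lemma zero: "F (\<lambda>t. 0) = 0"
  using scale[of "\<lambda>t. 0" 0] by simp

lemma diff: "x \<in> linf \<Longrightarrow> y \<in> linf \<Longrightarrow> F (\<lambda>t. x t - y t) = F x - F y"
  using add[of x "\<lambda>t. (-1) * y t"] scale[of y "-1"] by simp

lemma sum: "finite S \<Longrightarrow> (\<And>i. i \<in> S \<Longrightarrow> f i \<in> linf) \<Longrightarrow> F (\<lambda>t. \<Sum>i\<in>S. f i t) = (\<Sum>i\<in>S. F (f i))"
proof (induction S rule: finite_induct)
  case empty then show ?case by (simp add: zero)
next
  case (insert a S)
  then show ?case using add[of "f a" "\<lambda>t. \<Sum>i\<in>S. f i t"] by simp
qed

lemma fin: assumes "\<And>t. N \<le> t \<Longrightarrow> x t = 0"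
  shows "F x = (\<Sum>i<N. x i * F (ev i))"
proof -
  have "F x = F (\<lambda>t. \<Sum>i<N. x i * ev i t)" using fin_repr[OF assms] by simp
  also have "\<dots> = (\<Sum>i<N. F (\<lambda>t. x i * ev i t))" by (rule sum) auto
  also have "\<dots> = (\<Sum>i<N. x i * F (ev i))" by (simp add: scale)
  finally show ?thesis .
qed

lemma TT_eq: "F (TT N) = F (\<lambda>t. 1) - (\<Sum>i<N. F (ev i))"
proof -
  have "F (\<lambda>t. 1) = F (\<lambda>t. TT N t + (if t < N then 1 else 0))"
    by (rule arg_cong[where f=F]) (auto simp: TT_def)
  also have "\<dots> = F (TT N) + F (\<lambda>t. if t < N then 1 else 0)"
    by (rule add) simp_all
  finally have "F (\<lambda>t. 1) = F (TT N) + F (\<lambda>t. if t < N then 1 else 0)" .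
  moreover have "F (\<lambda>t. if t < N then 1 else 0) = (\<Sum>i<N. F (ev i))"
    by (subst fin[of N]) auto
  ultimately show ?thesis by simp
qed

lemma tail_bound: assumes "x \<in> linf" "\<And>t. \<bar>x t\<bar> \<le> B"
  shows "\<bar>F (\<lambda>t. if N \<le> t then x t else 0)\<bar> \<le> B * F (TT N)"
proof -
  let ?y = "\<lambda>t. if N \<le> t then x t else 0"
  have y: "?y \<in> linf" using assms by auto
  have bx: "-B \<le> x t \<and> x t \<le> B" for t using assms(2)[of t] by arith
  have "F ?y \<le> F (\<lambda>t. B * TT N t)" 
    by (rule mono[OF y linf_scale[OF linf_TT]]) (use bx in \<open>auto simp: TT_def\<close>)
  moreover have "F (\<lambda>t. (-B) * TT N t) \<le> F ?y"
    by (rule mono[OF linf_scale[OF linf_TT] y]) (use bx in \<open>auto simp: TT_def\<close>)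
  ultimately show ?thesis using scale[of "TT N" B] scale[of "TT N" "-B"] by (simp add: abs_le_iff)
qed

end

lemma posfun_eq:
  assumes F: "posfun F" and G: "posfun G"
    and e: "\<And>i. F (ev i) = G (ev i)" and one: "F (\<lambda>t. 1) = G (\<lambda>t. 1)"
    and small: "\<And>\<epsilon>. \<epsilon> > 0 \<Longrightarrow> \<exists>N. F (TT N) < \<epsilon>"
    and x: "x \<in> linf"
  shows "F x = G x"
proof -
  obtain B where B: "B \<ge> 0" "\<And>t. \<bar>x t\<bar> \<le> B" using x linfE by blast
  have key: "\<bar>F x - G x\<bar> \<le> 2 * B * F (TT N)" for N
  proof -
    let ?a = "\<lambda>t. if t < N then x t else 0" and ?b = "\<lambda>t. if N \<le> t then x t else 0"
    have xs: "x = (\<lambda>t. ?a t + ?b t)" by auto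
    have ab: "?a \<in> linf" "?b \<in> linf" using x by auto
    have Fx: "F x = F ?a + F ?b" using posfun.add[OF F ab] xs by metis
    have Gx: "G x = G ?a + G ?b" using posfun.add[OF G ab] xs by metis
    have "F ?a = G ?a" using posfun.fin[OF F, of N ?a] posfun.fin[OF G, of N ?a] e by simp
    moreover have "F (TT N) = G (TT N)" using posfun.TT_eq[OF F] posfun.TT_eq[OF G] e one by simp
    moreover note posfun.tail_bound[OF F x B(2), of N] posfun.tail_bound[OF G x B(2), of N]
    ultimately show ?thesis using Fx Gx by (simp add: abs_le_iff)
  qed
  show ?thesis
  proof (rule ccontr)
    assume ne: "F x \<noteq> G x"
    then have pos: "\<bar>F x - G x\<bar> / (2 * B + 1) > 0" using B by auto
    obtain N where N: "F (TT N) < \<bar>F x - G x\<bar> / (2 * B + 1)" using small[OF pos] by blast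
    have "F (TT N) \<ge> 0" using posfun.mono[OF F, of "\<lambda>t. 0" "TT N"] posfun.zero[OF F] by (auto simp: TT_def)
    then have "2 * B * F (TT N) \<le> (2*B+1) * F (TT N)" by (simp add: distrib_right)
    also have "\<dots> < \<bar>F x - G x\<bar>" using N B by (simp add: field_simps)
    finally show False using key[of N] by simp
  qed
qed


definition Dsc :: "real \<Rightarrow> seq \<Rightarrow> real" where
  "Dsc \<delta> x = (1 - \<delta>) * (\<Sum>t. \<delta> ^ t * x t)"

lemma linf_shift0[simp]: "d \<in> linf \<Longrightarrow> shift0 d \<in> linf"
proof -
  assume "d \<in> linf"
  then obtain B where B: "B \<ge> 0" "\<And>t. \<bar>d t\<bar> \<le> B" by (metis linfE)
  have "\<bar>shift0 d t\<bar> \<le> B" for t using B by (cases t) (auto simp: shift0_def)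
  then show ?thesis by (rule linfI)
qed

lemma linf_glue[simp]: "x \<in> linf \<Longrightarrow> glue (cst k) E x \<in> linf"
  unfolding glue_def cst_def by simp

context
  fixes \<delta> :: real
  assumes d0: "0 < \<delta>" and d1: "\<delta> < 1"
begin

lemma summ: assumes "x \<in> linf" shows "summable (\<lambda>t. \<delta> ^ t * x t)"
proof -
  obtain B where B: "B \<ge> 0" "\<And>t. \<bar>x t\<bar> \<le> B" using assms by (metis linfE)
  show ?thesis
  proof (rule summable_comparison_test[where g="\<lambda>t. B * \<delta> ^ t"])
    show "\<exists>N. \<forall>n\<ge>N. norm (\<delta> ^ n * x n) \<le> B * \<delta> ^ n"
      using B d0 by (auto simp: abs_mult mult.commute intro!: mult_left_mono)
    show "summable (\<lambda>t. B * \<delta> ^ t)" using d0 d1 by (intro summable_mult summable_geometric) simp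
  qed
qed

lemma Dsc_posfun: "posfun (Dsc \<delta>)"
proof
  fix x y assume x: "x \<in> linf" and y: "y \<in> linf"
  show "Dsc \<delta> (\<lambda>t. x t + y t) = Dsc \<delta> x + Dsc \<delta> y"
    unfolding Dsc_def using suminf_add[OF summ[OF x] summ[OF y]]
    by (metis (no_types, lifting) distrib_left ext)
  assume le: "\<And>t. x t \<le> y t"
  have "(\<Sum>t. \<delta> ^ t * x t) \<le> (\<Sum>t. \<delta> ^ t * y t)"
    by (rule suminf_le[OF _ summ[OF x] summ[OF y]]) (use le d0 in \<open>auto intro: mult_left_mono\<close>)
  then show "Dsc \<delta> x \<le> Dsc \<delta> y" unfolding Dsc_def using d1 by (simp add: mult_left_mono)
next
  fix x c assume x: "x \<in> linf"
  show "Dsc \<delta> (\<lambda>t. c * x t) = c * Dsc \<delta> x"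
    unfolding Dsc_def using suminf_mult[OF summ[OF x], of c]
    by (simp add: algebra_simps)
qed

lemma Dsc_const: "Dsc \<delta> (\<lambda>t. a) = a"
proof -
  have "(\<lambda>t. \<delta> ^ t * a) sums (1 / (1 - \<delta>) * a)"
    by (rule sums_mult2) (rule geometric_sums, use d0 d1 in simp)
  then show ?thesis unfolding Dsc_def using d1 by (simp add: sums_iff)
qed

lemma Dsc_cst: "Dsc \<delta> (cst a) = a"
  unfolding cst_def by (rule Dsc_const)

lemma Dsc_ev: "Dsc \<delta> (ev i) = (1 - \<delta>) * \<delta> ^ i"
proof -
  have "(\<Sum>t. \<delta> ^ t * ev i t) = (\<Sum>t\<in>{i}. \<delta> ^ t * ev i t)"
    by (rule suminf_finite) (auto simp: ev_def)
  then show ?thesis unfolding Dsc_def by (simp add: ev_def)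
qed

lemma Dsc_TT: "Dsc \<delta> (TT N) = \<delta> ^ N"
proof -
  have "Dsc \<delta> (TT N) = 1 - (\<Sum>i<N. (1 - \<delta>) * \<delta> ^ i)"
    using posfun.TT_eq[OF Dsc_posfun, of N] by (simp add: Dsc_const Dsc_ev)
  also have "\<dots> = 1 - (1 - \<delta>) * (\<Sum>i<N. \<delta> ^ i)" by (simp add: sum_distrib_left)
  also have "\<dots> = \<delta> ^ N" using d1 by (simp add: sum_gp_strict)
  finally show ?thesis .
qed

lemma Dsc_shift: assumes d: "d \<in> linf" shows "Dsc \<delta> (shift0 d) = \<delta> * Dsc \<delta> d"
proof -
  let ?f = "\<lambda>t. \<delta> ^ t * shift0 d t"
  have sf: "summable ?f" using summ[OF linf_shift0[OF d]] .
  have "(\<Sum>n. ?f (Suc n)) = suminf ?f - ?f 0" by (rule suminf_split_head[OF sf])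
  moreover have "(\<lambda>n. ?f (Suc n)) = (\<lambda>n. \<delta> * (\<delta> ^ n * d n))" by (auto simp: shift0_def)
  moreover have "?f 0 = 0" by (simp add: shift0_def)
  ultimately have "suminf ?f = \<delta> * (\<Sum>n. \<delta> ^ n * d n)"
    using suminf_mult[OF summ[OF d], of \<delta>] by simp
  then show ?thesis unfolding Dsc_def by simp
qed

end


lemma ce_unique:
  assumes a0: "0 < a" "a < 1" and b0: "0 < b" "b < 1"
    and ca: "constant_equivalent R (Dsc a)" and cb: "constant_equivalent R (Dsc b)"
  shows "a = b"
proof -
  have "Dsc b x = Dsc a x" if x: "x \<in> linf" for x
  proof -
    have "indiff R x (cst (Dsc a x))" using ca x unfolding constant_equivalent_def by blast
    then have "Dsc b x = Dsc b (cst (Dsc a x))"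
      using cb x unfolding constant_equivalent_def indiff_def by (meson linf_cst order_antisym)
    then show ?thesis using Dsc_cst[OF b0] by simp
  qed
  from this[of "ev 0"] show ?thesis using Dsc_ev[OF a0, of 0] Dsc_ev[OF b0, of 0] by simp
qed

lemma backward:
  assumes d0: "0 < \<delta>" and d1: "\<delta> < 1" and ce: "constant_equivalent R (Dsc \<delta>)"
  shows "weak_order R \<and> continuity R \<and> ICRP R \<and> convexity R \<and>
          monotone_continuity R \<and> ISU R \<and> IOU R \<and> strong_monotonicity R \<and> IDIS R"
proof -
  let ?D = "Dsc \<delta>"
  interpret P: posfun ?D by (rule Dsc_posfun[OF d0 d1])
  have RD: "x \<in> linf \<Longrightarrow> y \<in> linf \<Longrightarrow> R x y \<longleftrightarrow> ?D y \<le> ?D x" for x y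
    using ce unfolding constant_equivalent_def by blast
  have Dc: "?D (cst a) = a" "?D (\<lambda>t. a) = a" for a using Dsc_cst[OF d0 d1] Dsc_const[OF d0 d1] by auto
  have Dmix: "?D (\<lambda>t. \<alpha> * x t + \<beta> * z t) = \<alpha> * ?D x + \<beta> * ?D z" if "x \<in> linf" "z \<in> linf" for x z \<alpha> \<beta>
    using that by (simp add: P.add P.scale)
  have WO: "weak_order R" unfolding weak_order_def using RD by (meson linear order_trans)
  have CO: "continuity R" unfolding continuity_def
  proof (intro ballI impI conjI)
    fix x y z assume xyz: "x \<in> linf" "y \<in> linf" "z \<in> linf"
    have e1: "{\<alpha>\<in>{0..1}. R (\<lambda>t. \<alpha> * x t + (1 - \<alpha>) * z t) y} = {0..1} \<inter> {\<alpha>. ?D y \<le> \<alpha> * ?D x + (1 - \<alpha>) * ?D z}"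
      using RD[of "\<lambda>t. \<alpha> * x t + (1 - \<alpha>) * z t" y for \<alpha>] Dmix xyz by auto
    have e2: "{\<alpha>\<in>{0..1}. R y (\<lambda>t. \<alpha> * x t + (1 - \<alpha>) * z t)} = {0..1} \<inter> {\<alpha>. \<alpha> * ?D x + (1 - \<alpha>) * ?D z \<le> ?D y}"
      using RD[of y "\<lambda>t. \<alpha> * x t + (1 - \<alpha>) * z t" for \<alpha>] Dmix xyz by auto
    show "closed {\<alpha>\<in>{0..1}. R (\<lambda>t. \<alpha> * x t + (1 - \<alpha>) * z t) y}" unfolding e1
      by (intro closed_Int closed_atLeastAtMost closed_Collect_le continuous_intros)
    show "closed {\<alpha>\<in>{0..1}. R y (\<lambda>t. \<alpha> * x t + (1 - \<alpha>) * z t)}" unfolding e2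
      by (intro closed_Int closed_atLeastAtMost closed_Collect_le continuous_intros)
  qed
  have Dadd: "?D (\<lambda>t. x t + y t) = ?D x + ?D y" if "x \<in> linf" "y \<in> linf" for x y
    using P.add that by blast
  have IC: "ICRP R" unfolding ICRP_def
  proof (intro ballI allI impI)
    fix x y \<theta> assume "x \<in> linf" "y \<in> linf" "R x y"
    then show "R (\<lambda>t. x t + \<theta>) (\<lambda>t. y t + \<theta>)"
      using RD Dadd[of x "\<lambda>t. \<theta>"] Dadd[of y "\<lambda>t. \<theta>"] by simp
  qed
  have CV: "convexity R" unfolding convexity_def
  proof (intro ballI allI impI)
    fix x y \<theta> lam assume xy: "x \<in> linf" "y \<in> linf" and l: "lam \<in> {0..1::real}"
      and h: "R x (cst \<theta>) \<and> R y (cst \<theta>)"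
    have "\<theta> \<le> ?D x" "\<theta> \<le> ?D y" using h RD xy Dc by auto
    then have "lam * \<theta> \<le> lam * ?D x" "(1 - lam) * \<theta> \<le> (1 - lam) * ?D y" using l
      by (auto intro: mult_left_mono)
    moreover have "\<theta> = lam * \<theta> + (1 - lam) * \<theta>" by algebra
    ultimately have "\<theta> \<le> lam * ?D x + (1 - lam) * ?D y" by linarith
    then show "R (\<lambda>t. lam * x t + (1 - lam) * y t) (cst \<theta>)" using RD Dmix xy Dc by simp
  qed
  have MC: "monotone_continuity R" unfolding monotone_continuity_def
  proof (intro ballI allI impI)
    fix x \<theta> k and E :: "nat \<Rightarrow> nat set" assume x: "x \<in> linf"
      and h: "strict R x (cst \<theta>) \<and> (\<forall>n. E (Suc n) \<subseteq> E n) \<and> (\<Inter>n. E n) = {}"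
    have gt: "\<theta> < ?D x" using h x RD Dc unfolding strict_def by auto
    obtain B where B: "B \<ge> 0" "\<And>t. \<bar>x t\<bar> \<le> B" using x by (metis linfE)
    obtain N where N: "\<delta> ^ N < (?D x - \<theta>) / (\<bar>k\<bar> + B + 1)"
      using real_arch_pow_inv[of "(?D x - \<theta>) / (\<bar>k\<bar> + B + 1)" \<delta>] gt d1 B by auto
    have dec: "decseq E" using h by (intro decseq_SucI) auto
    have "\<forall>t<N. \<exists>n. t \<notin> E n" using h by blast
    then obtain f where f: "\<And>t. t < N \<Longrightarrow> t \<notin> E (f t)" by metis
    define n0 where "n0 = (\<Sum>t<N. f t)"
    have "f t \<le> n0" if "t < N" for t unfolding n0_def
      by (rule member_le_sum) (use that in auto)
    then have En0: "t \<notin> E n0" if "t < N" for t using f[OF that] decseqD[OF dec, of "f t" n0] that by auto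
    let ?g = "glue (cst k) (E n0) x"
    let ?h = "\<lambda>t. if N \<le> t then ?g t - x t else 0"
    have g: "?g \<in> linf" using x by simp
    have hx: "?g = (\<lambda>t. x t + ?h t)" using En0 by (auto simp: glue_def)
    have hb: "\<bar>(?g t - x t)\<bar> \<le> \<bar>k\<bar> + B" for t using B(2)[of t] by (auto simp: glue_def cst_def)
    have "\<bar>?D ?h\<bar> \<le> (\<bar>k\<bar> + B) * ?D (TT N)"
      by (rule P.tail_bound) (use g x hb in auto)
    also have "\<dots> = (\<bar>k\<bar> + B) * \<delta> ^ N" using Dsc_TT[OF d0 d1] by simp
    also have "\<dots> \<le> (\<bar>k\<bar> + B + 1) * \<delta> ^ N" using d0 by simp
    also have "\<dots> < ?D x - \<theta>" using N B by (simp add: field_simps)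
    finally have "\<bar>?D ?h\<bar> < ?D x - \<theta>" .
    moreover have "?D ?g = ?D x + ?D ?h" using hx Dadd[of x ?h] x g by auto
    ultimately have "\<theta> < ?D ?g" by linarith
    then have "strict R ?g (cst \<theta>)" using RD g Dc unfolding strict_def by auto
    then show "\<exists>n0. strict R (glue (cst k) (E n0) x) (cst \<theta>)" by blast
  qed
  have IS: "ISU R" unfolding ISU_def
    using RD P.scale by (auto intro: mult_left_mono)
  have IO: "IOU R" unfolding IOU_def indiff_def
    using RD Dadd by auto
  have SM: "strong_monotonicity R" unfolding strong_monotonicity_def
  proof (intro ballI conjI impI)
    fix x y assume xy: "x \<in> linf" "y \<in> linf"
    { assume "\<forall>t. y t \<le> x t" then show "R x y" using RD xy P.mono by auto }
    assume h: "(\<forall>t. y t \<le> x t) \<and> x \<noteq> y"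
    then obtain t where t: "x t \<noteq> y t" by auto
    then have pos: "x t - y t > 0" using h[THEN conjunct1, rule_format, of t] by simp
    have "?D (\<lambda>s. (x t - y t) * ev t s) \<le> ?D (\<lambda>s. x s - y s)"
      by (rule P.mono) (use xy h in \<open>auto simp: ev_def\<close>)
    then have "(x t - y t) * ((1 - \<delta>) * \<delta> ^ t) \<le> ?D x - ?D y"
      using P.scale[of "ev t"] Dsc_ev[OF d0 d1] P.diff[OF xy] by simp
    moreover have "(x t - y t) * ((1 - \<delta>) * \<delta> ^ t) > 0" using pos d0 d1 by simp
    ultimately show "strict R x y" unfolding strict_def using RD xy by auto
  qed
  have ID: "IDIS R" unfolding IDIS_def
  proof (intro ballI impI)
    fix x d assume xd: "x \<in> linf" "d \<in> linf" and h: "R (\<lambda>t. x t + d t) x"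
    then have "0 \<le> ?D d" using RD Dadd by auto
    then have "0 \<le> ?D (shift0 d)" using Dsc_shift[OF d0 d1 xd(2)] d0 by simp
    then show "R (\<lambda>t. x t + shift0 d t) x" using RD Dadd xd by simp
  qed
  show ?thesis using WO CO IC CV MC IS IO SM ID by blast
qed


lemma shift0_ev2: "shift0 (\<lambda>t. a * ev i t - b * ev j t) = (\<lambda>t. a * ev (Suc i) t - b * ev (Suc j) t)"
  by (rule ext, simp add: shift0_def ev_def split: nat.split)

lemma cst_neq: "a \<noteq> b \<Longrightarrow> cst a \<noteq> cst b"
  by (auto simp: cst_def fun_eq_iff)

locale ax =
  fixes R :: prefrel
  assumes wo: "weak_order R" and cont: "continuity R" and mc: "monotone_continuity R"
    and isu: "ISU R" and iou: "IOU R" and sm: "strong_monotonicity R" and idis: "IDIS R"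
begin

lemma total: "x \<in> linf \<Longrightarrow> y \<in> linf \<Longrightarrow> R x y \<or> R y x"
  using wo unfolding weak_order_def by blast
lemma Rrefl: "x \<in> linf \<Longrightarrow> R x x" using total by blast
lemma trans: "x \<in> linf \<Longrightarrow> y \<in> linf \<Longrightarrow> z \<in> linf \<Longrightarrow> R x y \<Longrightarrow> R y z \<Longrightarrow> R x z"
  using wo unfolding weak_order_def by blast
lemma monoR: "x \<in> linf \<Longrightarrow> y \<in> linf \<Longrightarrow> (\<And>t. y t \<le> x t) \<Longrightarrow> R x y"
  using sm unfolding strong_monotonicity_def by blast
lemma smonoR: "x \<in> linf \<Longrightarrow> y \<in> linf \<Longrightarrow> (\<And>t. y t \<le> x t) \<Longrightarrow> x \<noteq> y \<Longrightarrow> strict R x y"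
  using sm unfolding strong_monotonicity_def by blast

lemma cst_R: "R (cst a) (cst b) \<longleftrightarrow> b \<le> a"
proof
  assume h: "R (cst a) (cst b)"
  show "b \<le> a"
  proof (rule ccontr)
    assume "\<not> b \<le> a"
    then have "strict R (cst b) (cst a)" by (intro smonoR cst_neq) (auto simp: cst_def)
    then show False using h unfolding strict_def by blast
  qed
qed (intro monoR, auto simp: cst_def)

lemma exists_ce: assumes x: "x \<in> linf" shows "\<exists>\<theta>. indiff R x (cst \<theta>)"
proof -
  obtain B where B: "B \<ge> 0" "\<And>t. \<bar>x t\<bar> \<le> B" using x by (metis linfE)
  let ?b = "cst B" and ?a = "cst (-B)"
  let ?m = "\<lambda>\<alpha>. (\<lambda>t. \<alpha> * ?b t + (1 - \<alpha>) * ?a t)"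
  have m: "?m \<alpha> = cst (\<alpha> * B + (1 - \<alpha>) * (-B))" for \<alpha> by (simp add: cst_def)
  have bb: "-B \<le> x t \<and> x t \<le> B" for t using B(2)[of t] by arith
  have bx: "R ?b x" by (rule monoR) (use bb x in \<open>auto simp: cst_def\<close>)
  have xa: "R x ?a" by (rule monoR) (use bb x in \<open>auto simp: cst_def\<close>)
  let ?P = "{\<alpha>\<in>{0..1}. R (?m \<alpha>) x}" and ?Q = "{\<alpha>\<in>{0..1}. R x (?m \<alpha>)}"
  have cc: "closed ?P \<and> closed ?Q"
    by (rule cont[unfolded continuity_def, THEN bspec[of _ _ "cst B"], THEN bspec[of _ _ x],
          THEN bspec[of _ _ "cst (-B)"], THEN mp]) (use bx xa x in auto)
  then have cl: "closed ?P" "closed ?Q" by auto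
  have "R (?m \<alpha>) x \<or> R x (?m \<alpha>)" for \<alpha> unfolding m using total[OF linf_cst x] by blast
  then have cov: "{0..1} \<subseteq> ?P \<union> ?Q" by auto
  have "1 \<in> ?P" using bx m[of 1] by simp
  moreover have "0 \<in> ?Q" using xa m[of 0] by simp
  ultimately have ne: "1 \<in> ?P \<inter> {0..1}" "0 \<in> ?Q \<inter> {0..1}" by auto
  have "?P \<inter> ?Q \<inter> {0..1::real} \<noteq> {}"
  proof
    assume "?P \<inter> ?Q \<inter> {0..1::real} = {}"
    from connected_closedD[OF connected_Icc[of 0 "1::real"] this cov cl] ne show False by blast
  qed
  then obtain \<alpha> where "R (?m \<alpha>) x" "R x (?m \<alpha>)" by auto
  then show ?thesis unfolding indiff_def m by blast
qed

definition CE :: "seq \<Rightarrow> real" where "CE x = (SOME \<theta>. indiff R x (cst \<theta>))"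

lemma CE_ind: "x \<in> linf \<Longrightarrow> indiff R x (cst (CE x))"
  unfolding CE_def using exists_ce by (rule someI_ex)

lemma CE_R: assumes "x \<in> linf" "y \<in> linf" shows "R x y \<longleftrightarrow> CE y \<le> CE x"
proof
  assume "R x y"
  then have "R (cst (CE x)) (cst (CE y))"
    using CE_ind[OF assms(1)] CE_ind[OF assms(2)] assms unfolding indiff_def by (meson linf_cst trans)
  then show "CE y \<le> CE x" by (simp add: cst_R)
next
  assume "CE y \<le> CE x"
  then have "R (cst (CE x)) (cst (CE y))" by (simp add: cst_R)
  then show "R x y"
    using CE_ind[OF assms(1)] CE_ind[OF assms(2)] assms unfolding indiff_def by (meson linf_cst trans)
qed

lemma CE_eq: assumes "x \<in> linf" "indiff R x (cst \<theta>)" shows "CE x = \<theta>"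
proof -
  have "R (cst \<theta>) (cst (CE x))" "R (cst (CE x)) (cst \<theta>)"
    using CE_ind[OF assms(1)] assms unfolding indiff_def by (meson linf_cst trans)+
  then show ?thesis by (simp add: cst_R)
qed

lemma CE_cst: "CE (cst \<theta>) = \<theta>"
  by (rule CE_eq) (auto simp: indiff_def Rrefl)

lemma CE_const: "CE (\<lambda>t. \<theta>) = \<theta>"
  using CE_cst unfolding cst_def .

lemma indiff_trans: "x \<in> linf \<Longrightarrow> y \<in> linf \<Longrightarrow> z \<in> linf \<Longrightarrow> indiff R x y \<Longrightarrow> indiff R y z \<Longrightarrow> indiff R x z"
  unfolding indiff_def using trans by blast

lemma CE_add: assumes x: "x \<in> linf" and z: "z \<in> linf" shows "CE (\<lambda>t. x t + z t) = CE x + CE z"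
proof -
  have h1: "indiff R (\<lambda>t. x t + z t) (\<lambda>t. cst (CE x) t + z t)"
    using iou CE_ind[OF x] x z unfolding IOU_def by (meson linf_cst)
  have h2: "indiff R (\<lambda>t. z t + cst (CE x) t) (\<lambda>t. cst (CE z) t + cst (CE x) t)"
    using iou CE_ind[OF z] z unfolding IOU_def by (meson linf_cst)
  have e1: "(\<lambda>t. cst (CE x) t + z t) = (\<lambda>t. z t + cst (CE x) t)" by (simp add: add.commute)
  have e2: "(\<lambda>t. cst (CE z) t + cst (CE x) t) = cst (CE x + CE z)" by (simp add: cst_def add.commute)
  have "indiff R (\<lambda>t. x t + z t) (cst (CE x + CE z))"
    using indiff_trans[OF _ _ _ h1 h2[unfolded e1[symmetric] e2]] x z by simp
  then show ?thesis by (rule CE_eq[rotated]) (use x z in simp)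
qed

lemma CE_scale_nn: assumes x: "x \<in> linf" and a: "\<alpha> \<ge> 0" shows "CE (\<lambda>t. \<alpha> * x t) = \<alpha> * CE x"
proof -
  have "indiff R (\<lambda>t. \<alpha> * x t) (\<lambda>t. \<alpha> * cst (CE x) t)"
    using isu CE_ind[OF x] x a unfolding ISU_def indiff_def by (meson linf_cst)
  moreover have "(\<lambda>t. \<alpha> * cst (CE x) t) = cst (\<alpha> * CE x)" by (simp add: cst_def)
  ultimately show ?thesis using x by (intro CE_eq) simp_all
qed

lemma CE_scale: assumes x: "x \<in> linf" shows "CE (\<lambda>t. c * x t) = c * CE x"
proof (cases "c \<ge> 0")
  case True then show ?thesis using CE_scale_nn[OF x] by blast
next
  case False
  have "CE (\<lambda>t. c * x t) + CE (\<lambda>t. (-c) * x t) = CE (\<lambda>t. c * x t + (-c) * x t)"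
    using CE_add[of "\<lambda>t. c * x t" "\<lambda>t. (-c) * x t"] x by simp
  also have "\<dots> = 0" using CE_const[of 0] by simp
  finally show ?thesis using CE_scale_nn[OF x, of "-c"] False by simp
qed

lemma CE_posfun: "posfun CE"
proof
  show "CE (\<lambda>t. x t + y t) = CE x + CE y" if "x \<in> linf" "y \<in> linf" for x y using CE_add that by blast
  show "CE (\<lambda>t. c * x t) = c * CE x" if "x \<in> linf" for x c using CE_scale that by blast
  show "CE x \<le> CE y" if "x \<in> linf" "y \<in> linf" "\<And>t. x t \<le> y t" for x y
    using CE_R[of y x] monoR[of y x] that by blast
qed

interpretation P: posfun CE by (rule CE_posfun)

definition mu where "mu i = CE (ev i)"

lemma mu_pos: "mu i > 0"
proof -
  have "ev i \<noteq> cst 0" by (auto simp: ev_def cst_def fun_eq_iff)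
  then have "strict R (ev i) (cst 0)" by (intro smonoR) (auto simp: ev_def cst_def)
  then have "\<not> R (cst 0) (ev i)" unfolding strict_def by blast
  then show ?thesis using CE_R[of "cst 0" "ev i"] CE_cst unfolding mu_def by simp
qed

lemma CE_shift: assumes d: "d \<in> linf" "CE d \<ge> 0" shows "CE (shift0 d) \<ge> 0"
proof -
  have e: "(\<lambda>t. cst 0 t + d t) = d" "(\<lambda>t. cst 0 t + shift0 d t) = shift0 d" by (auto simp: cst_def)
  have "R d (cst 0)" using CE_R[of d "cst 0"] d CE_cst by simp
  then have "R (shift0 d) (cst 0)" using idis d unfolding IDIS_def by (metis e linf_cst)
  then show ?thesis using CE_R[of "shift0 d" "cst 0"] d CE_cst by simp
qed

lemma mu_rec: "mu (Suc s) * mu 0 = mu s * mu 1"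
proof -
  have gen: "mu s * mu 1 - mu 0 * mu (Suc s) \<ge> 0" if "mu s * mu 0 - mu 0 * mu s \<ge> 0" for s
  proof -
    let ?d = "\<lambda>t. mu s * ev 0 t - mu 0 * ev s t"
    have d: "?d \<in> linf" by simp
    have "CE ?d = mu s * mu 0 - mu 0 * mu s" using P.diff[of "\<lambda>t. mu s * ev 0 t" "\<lambda>t. mu 0 * ev s t"]
      by (simp add: P.scale mu_def)
    then have "CE (shift0 ?d) \<ge> 0" using CE_shift[OF d] that by simp
    moreover have "CE (shift0 ?d) = mu s * mu 1 - mu 0 * mu (Suc s)" unfolding shift0_ev2
      using P.diff[of "\<lambda>t. mu s * ev 1 t" "\<lambda>t. mu 0 * ev (Suc s) t"]
      by (simp add: P.scale mu_def)
    ultimately show ?thesis by simp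
  qed
  have gen2: "mu 0 * mu (Suc s) - mu s * mu 1 \<ge> 0"
  proof -
    let ?d = "\<lambda>t. mu 0 * ev s t - mu s * ev 0 t"
    have d: "?d \<in> linf" by simp
    have "CE ?d = mu 0 * mu s - mu s * mu 0" using P.diff[of "\<lambda>t. mu 0 * ev s t" "\<lambda>t. mu s * ev 0 t"]
      by (simp add: P.scale mu_def)
    then have "CE (shift0 ?d) \<ge> 0" using CE_shift[OF d] by simp
    moreover have "CE (shift0 ?d) = mu 0 * mu (Suc s) - mu s * mu 1" unfolding shift0_ev2
      using P.diff[of "\<lambda>t. mu 0 * ev (Suc s) t" "\<lambda>t. mu s * ev 1 t"]
      by (simp add: P.scale mu_def)
    ultimately show ?thesis by simp
  qed
  show ?thesis using gen[of s] gen2 by (simp add: mult.commute)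
qed

definition dl where "dl = mu 1 / mu 0"

lemma mu_pow: "mu s = mu 0 * dl ^ s"
proof (induction s)
  case 0 then show ?case by simp
next
  case (Suc s)
  have "mu (Suc s) = mu s * mu 1 / mu 0" using mu_rec[of s] mu_pos[of 0]
    by (simp add: field_simps)
  then show ?case using Suc by (simp add: dl_def)
qed

lemma dl_pos: "dl > 0" unfolding dl_def using mu_pos by simp

lemma small: assumes e: "\<epsilon> > 0" shows "\<exists>N. CE (TT N) < \<epsilon>"
proof -
  have s0: "strict R (cst 0) (cst (-\<epsilon>))" using e unfolding strict_def by (simp add: cst_R)
  have "\<exists>n0. strict R (glue (cst (-1)) {n0..} (cst 0)) (cst (-\<epsilon>))"
    using mc s0 unfolding monotone_continuity_def
    by (elim ballE allE[of _ 0] allE[of _ "-\<epsilon>"] allE[of _ "\<lambda>n. {n..}"] impE allE[of _ "-1"])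
       (auto, use Suc_n_not_le_n in blast)
  then obtain n0 where h: "strict R (glue (cst (-1)) {n0..} (cst 0)) (cst (-\<epsilon>))" by blast
  have g: "glue (cst (-1)) {n0..} (cst 0) = (\<lambda>t. (-1) * TT n0 t)"
    by (auto simp: glue_def cst_def TT_def)
  have "\<not> R (cst (-\<epsilon>)) (\<lambda>t. (-1) * TT n0 t)" using h unfolding strict_def g by blast
  then have "- \<epsilon> < CE (\<lambda>t. (-1) * TT n0 t)" using CE_R[of "cst (-\<epsilon>)" "\<lambda>t. (-1) * TT n0 t"] CE_cst
    by (simp del: mult_minus_left)
  then show ?thesis using P.scale[of "TT n0" "-1"] by (auto simp del: mult_minus_left)
qed

lemma TT_nn: "CE (TT N) \<ge> 0"
  using P.mono[of "\<lambda>t. 0" "TT N"] P.zero by (auto simp: TT_def)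

lemma TT_val: "CE (TT N) = 1 - (\<Sum>i<N. mu i)"
  using P.TT_eq[of N] CE_const unfolding mu_def by simp

lemma dl_lt1: "dl < 1"
proof (rule ccontr)
  assume "\<not> dl < 1"
  then have "mu i \<ge> mu 0" for i using mu_pow[of i] mu_pos[of 0] by (simp add: one_le_power)
  then have "(\<Sum>i<N. mu i) \<ge> real N * mu 0" for N
    using sum_mono[of "{..<N}" "\<lambda>_. mu 0" mu] by simp
  moreover obtain N where "1 / mu 0 < real N" using reals_Archimedean2 by blast
  ultimately have "(\<Sum>i<N. mu i) > 1" using mu_pos[of 0] by (smt (verit) divide_less_eq mult.commute)
  then show False using TT_nn[of N] TT_val[of N] by simp
qed

lemma mu0: "mu 0 = 1 - dl"
proof -
  define c where "c = mu 0 / (1 - dl)"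
  have c0: "c > 0" unfolding c_def using mu_pos dl_lt1 by simp
  have TTc: "CE (TT N) = 1 - c + c * dl ^ N" for N
  proof -
    have "(\<Sum>i<N. mu i) = (\<Sum>i<N. mu 0 * dl ^ i)" by (rule sum.cong[OF refl], rule mu_pow)
    also have "\<dots> = mu 0 * (\<Sum>i<N. dl ^ i)" by (simp add: sum_distrib_left)
    also have "\<dots> = c * (1 - dl ^ N)" using dl_lt1 by (simp add: sum_gp_strict c_def)
    finally have s: "(\<Sum>i<N. mu i) = c * (1 - dl ^ N)" .
    have "CE (TT N) = 1 - c * (1 - dl ^ N)" using TT_val[of N] s by simp
    then show ?thesis by (simp add: algebra_simps)
  qed
  have "c \<le> 1"
  proof (rule ccontr)
    assume "\<not> c \<le> 1"
    then obtain N where N: "dl ^ N < (c - 1) / c" using real_arch_pow_inv[of "(c-1)/c" dl] dl_lt1 c0 by auto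
    then have "c * dl ^ N < c - 1" using c0 by (simp add: field_simps)
    then show False using TT_nn[of N] TTc[of N] by simp
  qed
  moreover have "c \<ge> 1"
  proof (rule ccontr)
    assume "\<not> c \<ge> 1"
    then obtain N where "CE (TT N) < 1 - c" using small[of "1 - c"] by auto
    then show False using TTc[of N] c0 dl_pos by (smt (verit) zero_less_power mult_pos_pos)
  qed
  ultimately have "c = 1" by simp
  then show ?thesis unfolding c_def using dl_lt1 by (simp add: field_simps)
qed

lemma CE_Dsc: "x \<in> linf \<Longrightarrow> CE x = Dsc dl x"
proof (rule posfun_eq[OF CE_posfun Dsc_posfun[OF dl_pos dl_lt1]])
  have "mu i = (1 - dl) * dl ^ i" for i using mu_pow[of i] unfolding mu0 .
  then show "CE (ev i) = Dsc dl (ev i)" for i using Dsc_ev[OF dl_pos dl_lt1] unfolding mu_def by simp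
  show "CE (\<lambda>t. 1) = Dsc dl (\<lambda>t. 1)" using Dsc_const[OF dl_pos dl_lt1] CE_const by simp
  show "\<exists>N. CE (TT N) < \<epsilon>" if "\<epsilon> > 0" for \<epsilon> using small that by blast
qed

lemma forward: "\<exists>\<delta>. 0 < \<delta> \<and> \<delta> < 1 \<and> constant_equivalent R (Dsc \<delta>)"
proof (intro exI conjI)
  show "0 < dl" "dl < 1" by (rule dl_pos, rule dl_lt1)
  show "constant_equivalent R (Dsc dl)" unfolding constant_equivalent_def
    using CE_ind CE_R CE_Dsc by simp
qed

end

lemma Dsc_lam: "(\<lambda>x. (1 - \<delta>) * (\<Sum>t. \<delta> ^ t * x t)) = Dsc \<delta>"
  by (simp add: Dsc_def fun_eq_iff)

theorem proposition3:
  fixes R :: "(nat \<Rightarrow> real) \<Rightarrow> (nat \<Rightarrow> real) \<Rightarrow> bool"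
  shows "(weak_order R \<and> continuity R \<and> ICRP R \<and> convexity R \<and>
          monotone_continuity R \<and> ISU R \<and> IOU R \<and> strong_monotonicity R \<and> IDIS R)
     \<longleftrightarrow> (\<exists>!\<delta>::real. 0 < \<delta> \<and> \<delta> < 1 \<and>
            constant_equivalent R (\<lambda>x. (1 - \<delta>) * (\<Sum>t. \<delta> ^ t * x t)))"
  unfolding Dsc_lam
proof
  assume h: "weak_order R \<and> continuity R \<and> ICRP R \<and> convexity R \<and>
          monotone_continuity R \<and> ISU R \<and> IOU R \<and> strong_monotonicity R \<and> IDIS R"
  then interpret ax R by unfold_locales blast+
  obtain \<delta> where d: "0 < \<delta> \<and> \<delta> < 1 \<and> constant_equivalent R (Dsc \<delta>)" using forward by blast
  show "\<exists>!\<delta>. 0 < \<delta> \<and> \<delta> < 1 \<and> constant_equivalent R (Dsc \<delta>)"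
    by (rule ex1I[of _ \<delta>]) (use d ce_unique in blast)+
next
  assume "\<exists>!\<delta>. 0 < \<delta> \<and> \<delta> < 1 \<and> constant_equivalent R (Dsc \<delta>)"
  then obtain \<delta> where "0 < \<delta>" "\<delta> < 1" "constant_equivalent R (Dsc \<delta>)" by blast
  then show "weak_order R \<and> continuity R \<and> ICRP R \<and> convexity R \<and>
          monotone_continuity R \<and> ISU R \<and> IOU R \<and> strong_monotonicity R \<and> IDIS R"
    by (rule backward)
qed

end
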